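(* Let $(X,d)$ be a compact metric space and $(X,f)$ a flow or semiflow that has the weak reparametrized gluing orbit property and is not minimal. Then there exist $x,y\in X$, $\epsilon>0$ and $T>0$ such that $d(f^t(x),x)\ge\epsilon$ for all $t\ge T$; $d(f^t(y),x)\ge\epsilon$ for all $t\ge T$; $d(f^t(y),y)\ge\epsilon$ for all $t\ge T$; and $d(f^t(x),y)\ge\epsilon$ for all $t\ge 0$.
   Context: A flow (resp. semiflow) on $X$ is a continuous family $\{f^t\}$ of continuous maps $X\to X$ indexed by $t\in\mathbb{R}$ (resp. $t\in[0,\infty)$) with $f^0=\mathrm{id}$ and $f^{t+s}=f^t\circ f^s$. $(X,f)$ is minimal if for every $x\in X$ the forward orbit $\{f^t(x):t\ge 0\}$ is dense in $X$. For $L\ge 1$, an $L$-reparametrization is a strictly increasing continuous function $\gamma:[0,\infty)\to[0,\infty)$ with $\gamma(0)=0$ and $L^{-1}\le \frac{\gamma(t_1)-\gamma(t_2)}{t_1-t_2}\le L$ for all $t_1\ne t_2$ in $[0,\infty)$. An orbit sequence of rank $k$ is a finite sequence $\mathscr{C}=\{(x_j,m_j)\in X\times[0,\infty):j=1,\dots,k\}$. A gap for it is a $(k-1)$-tuple $\mathscr{g}=\{t_j\in[0,\infty):j=1,\dots,k-1\}$. Given a reparametrization $\gamma$ and $\epsilon>0$, $(\mathscr{C},\mathscr{g},\gamma)$ is $\epsilon$-shadowed by $z\in X$ if for every $j=1,\dots,k$ and every $t\in[0,m_j]$ one has $d(f^{\gamma(s_j+t)}(z),f^t(x_j))<\epsilon$,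 where $s_1=0$ and $s_j=\sum_{i=1}^{j-1}(m_i+t_i)$ for $j\ge2$. $(X,f)$ has the weak reparametrized gluing orbit property if for every $\epsilon>0$ there is $M=M(\epsilon)>0$ such that for every orbit sequence $\mathscr{C}$ there exist a gap $\mathscr{g}$ with $\max\mathscr{g}\le M$ and an $M$-reparametrization $\gamma$ such that $(\mathscr{C},\mathscr{g},\gamma)$ is $\epsilon$-shadowed by some point of $X$. *)

theory Defs
  imports "HOL-Analysis.Analysis"
begin

definition is_semiflow :: "'a::metric_space set \<Rightarrow> (real \<Rightarrow> 'a \<Rightarrow> 'a) \<Rightarrow> bool" where
  "is_semiflow X f \<longleftrightarrow>
     continuous_on ({0..} \<times> X) (\<lambda>(t, x). f t x) \<and>
     (\<forall>t\<ge>0. \<forall>x\<in>X. f t x \<in> X) \<and>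
     (\<forall>x\<in>X. f 0 x = x) \<and>
     (\<forall>t\<ge>0. \<forall>s\<ge>0. \<forall>x\<in>X. f (t + s) x = f t (f s x))"

definition is_flow :: "'a::metric_space set \<Rightarrow> (real \<Rightarrow> 'a \<Rightarrow> 'a) \<Rightarrow> bool" where
  "is_flow X f \<longleftrightarrow>
     continuous_on (UNIV \<times> X) (\<lambda>(t, x). f t x) \<and>
     (\<forall>t. \<forall>x\<in>X. f t x \<in> X) \<and>
     (\<forall>x\<in>X. f 0 x = x) \<and>
     (\<forall>t s. \<forall>x\<in>X. f (t + s) x = f t (f s x))"

definition minimal :: "'a::metric_space set \<Rightarrow> (real \<Rightarrow> 'a \<Rightarrow> 'a) \<Rightarrow> bool" where
  "minimal X f \<longleftrightarrow> (\<forall>x\<in>X. X \<subseteq> closure {f t x | t. t \<ge> 0})"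

definition reparametrization :: "real \<Rightarrow> (real \<Rightarrow> real) \<Rightarrow> bool" where
  "reparametrization L \<gamma> \<longleftrightarrow>
     (\<forall>t\<ge>0. \<gamma> t \<ge> 0) \<and> \<gamma> 0 = 0 \<and>
     strict_mono_on {0..} \<gamma> \<and> continuous_on {0..} \<gamma> \<and>
     (\<forall>t1\<ge>0. \<forall>t2\<ge>0. t1 \<noteq> t2 \<longrightarrow>
        inverse L \<le> (\<gamma> t1 - \<gamma> t2) / (t1 - t2) \<and> (\<gamma> t1 - \<gamma> t2) / (t1 - t2) \<le> L)"

text \<open>Orbit sequence of rank k: points xs j and times ms j for j < k (0-indexed).
  Gap: ts j for j < k - 1. Shadowing by z with reparametrization \<gamma>.\<close>
definition shadows ::
  "'a::metric_space set \<Rightarrow> (real \<Rightarrow> 'a \<Rightarrow> 'a) \<Rightarrow> real \<Rightarrow> nat \<Rightarrow> (nat \<Rightarrow> 'a) \<Rightarrow> (nat \<Rightarrow> real)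
     \<Rightarrow> (nat \<Rightarrow> real) \<Rightarrow> (real \<Rightarrow> real) \<Rightarrow> 'a \<Rightarrow> bool" where
  "shadows X f \<epsilon> k xs ms ts \<gamma> z \<longleftrightarrow>
     (\<forall>j<k. \<forall>t\<in>{0..ms j}.
        dist (f (\<gamma> ((\<Sum>i<j. ms i + ts i) + t)) z) (f t (xs j)) < \<epsilon>)"

definition weak_reparam_gluing :: "'a::metric_space set \<Rightarrow> (real \<Rightarrow> 'a \<Rightarrow> 'a) \<Rightarrow> bool" where
  "weak_reparam_gluing X f \<longleftrightarrow>
     (\<forall>\<epsilon>>0. \<exists>M>0. \<forall>k::nat. \<forall>xs ms.
        k \<ge> 1 \<and> (\<forall>j<k. xs j \<in> X \<and> ms j \<ge> 0) \<longrightarrow>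
        (\<exists>ts \<gamma> z. (\<forall>j<k - 1. 0 \<le> ts j \<and> ts j \<le> M) \<and> reparametrization M \<gamma> \<and>
           z \<in> X \<and> shadows X f \<epsilon> k xs ms ts \<gamma> z))"

end

theory Submission
  imports Defs
begin

lemma flow_semiflow:
  assumes "is_flow X f \<or> is_semiflow X f"
  shows "is_semiflow X f"
  using assms unfolding is_flow_def is_semiflow_def
  by (auto intro: continuous_on_subset)

lemma sf_cont_x:
  assumes "is_semiflow X f" "u \<ge> 0"
  shows "continuous_on X (f u)"
proof -
  have c: "continuous_on ({0..} \<times> X) (\<lambda>(t, x). f t x)"
    using assms(1) unfolding is_semiflow_def by auto
  have "continuous_on X ((\<lambda>(t, x). f t x) \<circ> (\<lambda>x. (u, x)))"
    by (rule continuous_on_compose) (auto intro!: continuous_intros continuous_on_subset[OF c] simp: assms(2))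
  then show ?thesis by (simp add: o_def)
qed

lemma sf_cont_t:
  assumes "is_semiflow X f" "x \<in> X"
  shows "continuous_on {0..} (\<lambda>t. f t x)"
proof -
  have c: "continuous_on ({0..} \<times> X) (\<lambda>(t, x). f t x)"
    using assms(1) unfolding is_semiflow_def by auto
  have "continuous_on {0..} ((\<lambda>(t, x). f t x) \<circ> (\<lambda>t. (t, x)))"
    by (rule continuous_on_compose) (auto intro!: continuous_intros continuous_on_subset[OF c] simp: assms(2))
  then show ?thesis by (simp add: o_def)
qed

lemma glue_step:
  assumes sf: "is_semiflow X f" and M: "M > 0"
    and G: "\<forall>k::nat. \<forall>xs ms.
        k \<ge> 1 \<and> (\<forall>j<k. xs j \<in> X \<and> ms j \<ge> 0) \<longrightarrow>
        (\<exists>ts \<gamma> z. (\<forall>j<k - 1. 0 \<le> ts j \<and> ts j \<le> M) \<and> reparametrization M \<gamma> \<and>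
           z \<in> X \<and> shadows X f \<epsilon> k xs ms ts \<gamma> z)"
    and p: "p \<in> X" and x0: "x0 \<in> X"
  shows "\<exists>z\<in>X. dist z p < \<epsilon> \<and> (\<forall>u. M*M \<le> u \<and> u*M \<le> real n \<longrightarrow>
            infdist (f u z) {f t x0 | t. t \<ge> 0} < \<epsilon>)"
proof -
  define xs where "xs = (\<lambda>j::nat. if j = 0 then p else x0)"
  define ms where "ms = (\<lambda>j::nat. if j = 0 then 0 else real n)"
  have "(2::nat) \<ge> 1 \<and> (\<forall>j<2. xs j \<in> X \<and> ms j \<ge> 0)"
    using p x0 by (auto simp: xs_def ms_def)
  with G obtain ts \<gamma> z where ts: "\<forall>j<2 - 1. 0 \<le> ts j \<and> ts j \<le> M"
    and rp: "reparametrization M \<gamma>" and zX: "z \<in> X"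
    and sh: "shadows X f \<epsilon> 2 xs ms ts \<gamma> z"
    by blast
  have ts0: "0 \<le> ts 0" "ts 0 \<le> M" using ts by auto
  have g0: "\<gamma> 0 = 0" and gc: "continuous_on {0..} \<gamma>"
    and sl: "\<And>t1 t2. t1 \<ge> 0 \<Longrightarrow> t2 \<ge> 0 \<Longrightarrow> t1 \<noteq> t2 \<Longrightarrow>
        inverse M \<le> (\<gamma> t1 - \<gamma> t2) / (t1 - t2) \<and> (\<gamma> t1 - \<gamma> t2) / (t1 - t2) \<le> M"
    using rp unfolding reparametrization_def by auto
  have f0: "\<And>x. x \<in> X \<Longrightarrow> f 0 x = x" using sf unfolding is_semiflow_def by auto
  have sh0: "dist (f (\<gamma> 0) z) (f 0 p) < \<epsilon>"
    using sh unfolding shadows_def by (auto simp: xs_def ms_def elim!: allE[of _ 0])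
  hence dz: "dist z p < \<epsilon>" using g0 f0 zX p by simp
  have sh1: "\<forall>t\<in>{0..real n}. dist (f (\<gamma> (ts 0 + t)) z) (f t x0) < \<epsilon>"
    using sh unfolding shadows_def by (auto simp: xs_def ms_def elim!: allE[of _ 1])
  have up: "\<gamma> t \<le> M * t" if "t \<ge> 0" for t
  proof (cases "t = 0")
    case True then show ?thesis using g0 by simp
  next
    case False
    then have "t > 0" using that by simp
    have "(\<gamma> t - \<gamma> 0) / (t - 0) \<le> M" using sl[of t 0] that False by auto
    then show ?thesis using \<open>t > 0\<close> g0 by (simp add: divide_le_eq mult.commute)
  qed
  have lo: "t / M \<le> \<gamma> t" if "t \<ge> 0" for t
  proof (cases "t = 0")
    case True then show ?thesis using g0 by simp
  next
    case False
    then have "t > 0" using that by simp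
    have "inverse M \<le> (\<gamma> t - \<gamma> 0) / (t - 0)" using sl[of t 0] that False by auto
    then show ?thesis using \<open>t > 0\<close> g0 M by (simp add: le_divide_eq field_simps)
  qed
  have "\<forall>u. M*M \<le> u \<and> u*M \<le> real n \<longrightarrow> infdist (f u z) {f t x0 | t. t \<ge> 0} < \<epsilon>"
  proof (intro allI impI)
    fix u assume u: "M*M \<le> u \<and> u*M \<le> real n"
    have a1: "\<gamma> (ts 0) \<le> u"
      using up[of "ts 0"] ts0 u M by (smt (verit) mult_left_mono)
    have "u \<le> real n / M" using u M by (simp add: le_divide_eq)
    also have "\<dots> \<le> (ts 0 + real n) / M" using ts0 M by (simp add: divide_right_mono)
    also have "\<dots> \<le> \<gamma> (ts 0 + real n)" using lo[of "ts 0 + real n"] ts0 by simp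
    finally have a2: "u \<le> \<gamma> (ts 0 + real n)" .
    have "continuous_on {ts 0 .. ts 0 + real n} \<gamma>"
      using gc by (rule continuous_on_subset) (use ts0 in auto)
    then obtain t' where t': "ts 0 \<le> t'" "t' \<le> ts 0 + real n" "\<gamma> t' = u"
      using IVT'[of \<gamma> "ts 0" u "ts 0 + real n"] a1 a2 by auto
    define t where "t = t' - ts 0"
    have "t \<in> {0..real n}" using t' by (auto simp: t_def)
    with sh1 have "dist (f (\<gamma> (ts 0 + t)) z) (f t x0) < \<epsilon>" by blast
    hence "dist (f u z) (f t x0) < \<epsilon>" using t' by (simp add: t_def)
    moreover have "f t x0 \<in> {f t x0 | t. t \<ge> 0}" using \<open>t \<in> {0..real n}\<close> by auto
    ultimately show "infdist (f u z) {f t x0 | t. t \<ge> 0} < \<epsilon>"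
      using infdist_le by (meson le_less_trans)
  qed
  with dz zX show ?thesis by blast
qed

lemma glue_limit:
  assumes cX: "compact X" and sf: "is_semiflow X f" and wg: "weak_reparam_gluing X f"
    and p: "p \<in> X" and x0: "x0 \<in> X" and e: "\<epsilon> > 0"
  shows "\<exists>C>0. \<exists>z\<in>X. dist z p \<le> \<epsilon> \<and> (\<forall>u\<ge>C. infdist (f u z) {f t x0 | t. t \<ge> 0} \<le> \<epsilon>)"
proof -
  define A0 where "A0 = {f t x0 | t. t \<ge> 0}"
  obtain M where M: "M > 0" and G: "\<forall>k::nat. \<forall>xs ms.
        k \<ge> 1 \<and> (\<forall>j<k. xs j \<in> X \<and> ms j \<ge> 0) \<longrightarrow>
        (\<exists>ts \<gamma> z. (\<forall>j<k - 1. 0 \<le> ts j \<and> ts j \<le> M) \<and> reparametrization M \<gamma> \<and>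
           z \<in> X \<and> shadows X f \<epsilon> k xs ms ts \<gamma> z)"
    using wg e unfolding weak_reparam_gluing_def by blast
  have "\<forall>n. \<exists>z\<in>X. dist z p < \<epsilon> \<and> (\<forall>u. M*M \<le> u \<and> u*M \<le> real n \<longrightarrow>
            infdist (f u z) A0 < \<epsilon>)"
    using glue_step[OF sf M G p x0] unfolding A0_def by blast
  then obtain zs where zs: "\<And>n. zs n \<in> X" "\<And>n. dist (zs n) p < \<epsilon>"
    "\<And>n u. M*M \<le> u \<Longrightarrow> u*M \<le> real n \<Longrightarrow> infdist (f u (zs n)) A0 < \<epsilon>"
    by metis
  obtain l r where l: "l \<in> X" "strict_mono (r :: nat \<Rightarrow> nat)" "(zs \<circ> r) \<longlonglongrightarrow> l"
    using seq_compactE[OF compact_imp_seq_compact[OF cX]] zs(1) by blast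
  have "dist l p \<le> \<epsilon>"
  proof (rule LIMSEQ_le_const2)
    show "(\<lambda>n. dist ((zs \<circ> r) n) p) \<longlonglongrightarrow> dist l p"
      by (intro tendsto_intros l(3))
    show "\<exists>N. \<forall>n\<ge>N. dist ((zs \<circ> r) n) p \<le> \<epsilon>" using zs(2) by (auto intro: less_imp_le)
  qed
  moreover have "\<forall>u\<ge>M*M. infdist (f u l) A0 \<le> \<epsilon>"
  proof (intro allI impI)
    fix u assume u: "u \<ge> M*M"
    hence u0: "u \<ge> 0" by (smt (verit) zero_le_square)
    have "(\<lambda>n. f u ((zs \<circ> r) n)) \<longlonglongrightarrow> f u l"
      by (rule continuous_on_tendsto_compose[OF sf_cont_x[OF sf u0] l(3) l(1)])
         (simp add: zs(1))
    hence lim: "(\<lambda>n. infdist (f u ((zs \<circ> r) n)) A0) \<longlonglongrightarrow> infdist (f u l) A0"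
      by (rule tendsto_infdist)
    obtain N :: nat where N: "u * M \<le> real N" using real_arch_simple by blast
    show "infdist (f u l) A0 \<le> \<epsilon>"
    proof (rule LIMSEQ_le_const2[OF lim], intro exI allI impI)
      fix n assume "n \<ge> N"
      hence "real N \<le> real (r n)" using seq_suble[OF l(2), of n] by simp
      hence "u*M \<le> real (r n)" using N by linarith
      thus "infdist (f u ((zs \<circ> r) n)) A0 \<le> \<epsilon>" using zs(3)[OF u] by (simp add: less_imp_le)
    qed
  qed
  ultimately show ?thesis using l(1) M unfolding A0_def
    by (intro exI[of _ "M*M"]) auto
qed

theorem lemma3p2:
  fixes X :: "'a::metric_space set" and f :: "real \<Rightarrow> 'a \<Rightarrow> 'a"
  assumes "compact X"
    and "is_flow X f \<or> is_semiflow X f"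
    and "weak_reparam_gluing X f"
    and "\<not> minimal X f"
  shows "\<exists>x\<in>X. \<exists>y\<in>X. \<exists>\<epsilon>>0. \<exists>T>0.
           (\<forall>t\<ge>T. dist (f t x) x \<ge> \<epsilon>) \<and>
           (\<forall>t\<ge>T. dist (f t y) x \<ge> \<epsilon>) \<and>
           (\<forall>t\<ge>T. dist (f t y) y \<ge> \<epsilon>) \<and>
           (\<forall>t\<ge>0. dist (f t x) y \<ge> \<epsilon>)"
proof -
  have sf: "is_semiflow X f" using flow_semiflow assms(2) by blast
  have fX: "\<And>t x. t \<ge> 0 \<Longrightarrow> x \<in> X \<Longrightarrow> f t x \<in> X"
    and f0: "\<And>x. x \<in> X \<Longrightarrow> f 0 x = x"
    and fadd: "\<And>t s x. t \<ge> 0 \<Longrightarrow> s \<ge> 0 \<Longrightarrow> x \<in> X \<Longrightarrow> f (t + s) x = f t (f s x)"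
    using sf unfolding is_semiflow_def by auto
  obtain x0 p where x0: "x0 \<in> X" and p: "p \<in> X" and pn: "p \<notin> closure {f t x0 | t. t \<ge> 0}"
    using assms(4) unfolding minimal_def by blast
  define A0 where "A0 = {f t x0 | t. t \<ge> 0}"
  have A0ne: "A0 \<noteq> {}" unfolding A0_def by auto
  define D where "D = infdist p A0"
  have D: "D > 0" using pn in_closure_iff_infdist_zero[OF A0ne, of p] infdist_nonneg[of p A0]
    unfolding D_def A0_def by auto
  define \<epsilon> where "\<epsilon> = D / 8"
  have e: "\<epsilon> > 0" using D by (simp add: \<epsilon>_def)
  obtain C z where C: "C > 0" and zX: "z \<in> X" and dzp: "dist z p \<le> \<epsilon>"
    and zorb: "\<forall>u\<ge>C. infdist (f u z) A0 \<le> \<epsilon>"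
    using glue_limit[OF assms(1) sf assms(3) p x0 e] unfolding A0_def by blast
  have hz: "infdist z A0 \<ge> D - \<epsilon>"
    using infdist_triangle[of p A0 z] dzp unfolding D_def by (simp add: dist_commute)
  obtain d where d: "d > 0" "\<forall>x'\<in>{0..}. dist x' 0 < d \<longrightarrow> dist (f x' z) (f 0 z) < \<epsilon>"
    using sf_cont_t[OF sf zX] e unfolding continuous_on_iff by (meson atLeast_iff order_refl)
  define s1 where "s1 = d / 2"
  have s1: "s1 > 0" using d by (simp add: s1_def)
  define x where "x = f s1 z"
  have dxz: "dist x z < \<epsilon>" using d s1 f0[OF zX] unfolding x_def s1_def by auto
  have xX: "x \<in> X" using fX s1 zX unfolding x_def by auto
  have hx: "infdist x A0 \<ge> D - 2*\<epsilon>"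
    using infdist_triangle[of z A0 x] dxz hz by (simp add: dist_commute)
  have fx: "f t x = f (t + s1) z" if "t \<ge> 0" for t
    using fadd[of t s1 z] that s1 zX unfolding x_def by simp
  have xorb: "infdist (f t x) A0 \<le> \<epsilon>" if "t \<ge> C" for t
    using zorb fx[of t] that C s1 by auto
  define K where "K = (\<lambda>t. f t x) ` {0..C}"
  have Kc: "compact K" unfolding K_def
    by (rule compact_continuous_image) (rule continuous_on_subset[OF sf_cont_t[OF sf xX]], auto)
  have Kne: "K \<noteq> {}" using C unfolding K_def by auto
  have zK: "z \<notin> K"
  proof
    assume "z \<in> K"
    then obtain t where t: "t \<in> {0..C}" "f t x = z" unfolding K_def by auto
    define \<tau> where "\<tau> = t + s1"
    have \<tau>: "\<tau> > 0" using t s1 by (simp add: \<tau>_def)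
    have ft: "f \<tau> z = z" using fx[of t] t unfolding \<tau>_def by auto
    have per: "f (real n * \<tau>) z = z" for n
    proof (induction n)
      case 0 then show ?case using f0[OF zX] by simp
    next
      case (Suc n)
      have "f (real (Suc n) * \<tau>) z = f (real n * \<tau> + \<tau>) z" by (simp add: algebra_simps)
      also have "\<dots> = f (real n * \<tau>) (f \<tau> z)" using fadd[of "real n * \<tau>" \<tau> z] \<tau> zX by simp
      finally show ?case using ft Suc by simp
    qed
    obtain N :: nat where N: "C / \<tau> \<le> real N" using real_arch_simple by blast
    have "C \<le> real N * \<tau>" using N \<tau> by (simp add: divide_le_eq)
    hence "infdist (f (real N * \<tau>) z) A0 \<le> \<epsilon>" using zorb by blast
    hence "infdist z A0 \<le> \<epsilon>" using per by simp
    thus False using hz e unfolding \<epsilon>_def by simp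
  qed
  define r0 where "r0 = infdist z K"
  have r0: "r0 > 0" unfolding r0_def
    by (rule infdist_pos_not_in_closed[OF compact_imp_closed[OF Kc] Kne zK])
  define \<delta> where "\<delta> = min (D/4) r0"
  have \<delta>: "\<delta> > 0" using D r0 by (simp add: \<delta>_def)
  have c1: "\<forall>t\<ge>C. dist (f t x) x \<ge> \<delta>"
  proof (intro allI impI)
    fix t assume t: "t \<ge> C"
    show "dist (f t x) x \<ge> \<delta>"
      using infdist_triangle[of x A0 "f t x"] dist_commute[of x "f t x"] xorb[OF t] hx
      min.cobounded1[of "D/4" r0] D
      unfolding \<delta>_def \<epsilon>_def by linarith
  qed
  have c2: "\<forall>t\<ge>C. dist (f t z) x \<ge> \<delta>"
  proof (intro allI impI)
    fix t assume t: "t \<ge> C"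
    show "dist (f t z) x \<ge> \<delta>"
      using infdist_triangle[of x A0 "f t z"] dist_commute[of x "f t z"] zorb[rule_format, OF t] hx
      min.cobounded1[of "D/4" r0] D
      unfolding \<delta>_def \<epsilon>_def by linarith
  qed
  have c3: "\<forall>t\<ge>C. dist (f t z) z \<ge> \<delta>"
  proof (intro allI impI)
    fix t assume t: "t \<ge> C"
    show "dist (f t z) z \<ge> \<delta>"
      using infdist_triangle[of z A0 "f t z"] dist_commute[of z "f t z"] zorb[rule_format, OF t] hz
      min.cobounded1[of "D/4" r0] D
      unfolding \<delta>_def \<epsilon>_def by linarith
  qed
  have c4: "\<forall>t\<ge>0. dist (f t x) z \<ge> \<delta>"
  proof (intro allI impI)
    fix t :: real assume t: "t \<ge> 0"
    show "dist (f t x) z \<ge> \<delta>"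
    proof (cases "t \<le> C")
      case True
      hence "f t x \<in> K" using t unfolding K_def by auto
      hence "r0 \<le> dist z (f t x)" unfolding r0_def by (rule infdist_le)
      thus ?thesis unfolding \<delta>_def by (simp add: dist_commute)
    next
      case False
      show ?thesis
        using infdist_triangle[of z A0 "f t x"] dist_commute[of z "f t x"] xorb[of t] False hz
        min.cobounded1[of "D/4" r0] D
      unfolding \<delta>_def \<epsilon>_def by linarith
    qed
  qed
  show ?thesis
    using xX zX \<delta> C c1 c2 c3 c4 by blast
qed

end
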